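(* Let $p\in\mathbb R_3[u_1,u_2]$ be a non-zero polynomial of the form $p=\lambda_1 u_1^3 + \lambda_2(u_1^2u_2+u_2^3)+\lambda_3 u_1u_2^2$ with $\lambda_1,\lambda_2,\lambda_3\in\mathbb R$. Then the affine line \[ \left\{\tfrac13u_1^3-u_1u_2^2+sp\mid s\in\mathbb R\right\} \] contains at least one polynomial with a root of multiplicity greater than one, equivalently with vanishing discriminant.
   Context: $\mathbb R_3[u_1,u_2]$ is the space of real homogeneous cubic polynomials in $u_1,u_2$; roots are understood projectively (linear factors over $\mathbb C$), and the discriminant of $q=q_1u_1^3+q_2u_1^2u_2+q_3u_1u_2^2+q_4u_2^3$ is $\Delta(q)=q_2^2q_3^2-4q_1q_3^3-4q_2^3q_4+18q_1q_2q_3q_4-27q_1^2q_4^2$. *)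

theory Defs
  imports Complex_Main
begin

text \<open>A binary cubic form q1 u1^3 + q2 u1^2 u2 + q3 u1 u2^2 + q4 u2^3 in R_3[u1,u2]
  is represented by its coefficient vector (q1, q2, q3, q4).\<close>

type_synonym bcubic = "real \<times> real \<times> real \<times> real"

definition cubic_disc :: "bcubic \<Rightarrow> real" where
  "cubic_disc q = (case q of (q1, q2, q3, q4) \<Rightarrow>
     q2^2 * q3^2 - 4 * q1 * q3^3 - 4 * q2^3 * q4 + 18 * q1 * q2 * q3 * q4 - 27 * q1^2 * q4^2)"

definition cadd :: "bcubic \<Rightarrow> bcubic \<Rightarrow> bcubic" where
  "cadd p q = (case p of (p1, p2, p3, p4) \<Rightarrow> case q of (q1, q2, q3, q4) \<Rightarrow>
     (p1 + q1, p2 + q2, p3 + q3, p4 + q4))"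

definition cscale :: "real \<Rightarrow> bcubic \<Rightarrow> bcubic" where
  "cscale s q = (case q of (q1, q2, q3, q4) \<Rightarrow> (s * q1, s * q2, s * q3, s * q4))"

end

theory Submission
  imports Defs
begin

lemma dr:
  fixes q1 q2 q3 q4 t :: real
  assumes "q1*t^3+q2*t^2+q3*t+q4 = 0" "3*q1*t^2+2*q2*t+q3 = 0"
  shows "cubic_disc (q1,q2,q3,q4) = 0"
proof -
  have h3: "q3 = -(3*q1*t^2+2*q2*t)" using assms(2) by linarith
  have h4: "q4 = -(q1*t^3+q2*t^2+q3*t)" using assms(1) by linarith
  have h4': "q4 = 2*q1*t^3 + q2*t^2" using h4 h3 by (simp add: algebra_simps power2_eq_square power3_eq_cube)
  have "cubic_disc (q1,q2,q3,q4) = q2^2*q3^2 - 4*q1*q3^3 - 4*q2^3*q4 + 18*q1*q2*q3*q4 - 27*q1^2*q4^2"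
    by (simp add: cubic_disc_def)
  also have "\<dots> = 0" unfolding h3 h4' by (simp add: power2_eq_square power3_eq_cube algebra_simps)
  finally show ?thesis .
qed

lemma big:
  fixes a k :: real
  assumes "a \<noteq> 0"
  shows "a * (-(1/3)*a*(1 + 3*\<bar>k\<bar>/\<bar>a\<bar>)^4 - k*(1 + 3*\<bar>k\<bar>/\<bar>a\<bar>)^3 - 2*a*(1 + 3*\<bar>k\<bar>/\<bar>a\<bar>)^2 + a) < 0"
proof -
  define T where "T = 1 + 3*\<bar>k\<bar>/\<bar>a\<bar>"
  have aa: "\<bar>a\<bar> > 0" using assms by simp
  have T1: "T \<ge> 1" unfolding T_def using aa by simp
  have Tk: "\<bar>a\<bar> * T \<ge> 3*\<bar>k\<bar>"
  proof -
    have "\<bar>a\<bar> * T = \<bar>a\<bar> + 3*\<bar>k\<bar>" unfolding T_def using aa by (simp add: field_simps)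
    thus ?thesis using aa by simp
  qed
  have T3: "T^3 \<ge> 0" using T1 by simp
  have e1: "a^2 * T^4 / 3 \<ge> \<bar>k\<bar>*\<bar>a\<bar>*T^3"
  proof -
    have "\<bar>a\<bar> * (\<bar>a\<bar>*T) * T^3 \<ge> \<bar>a\<bar> * (3*\<bar>k\<bar>) * T^3"
      using Tk T3 aa by (intro mult_right_mono mult_left_mono) auto
    moreover have "\<bar>a\<bar> * (\<bar>a\<bar>*T) * T^3 = a^2 * T^4"
      by (simp add: power2_eq_square power4_eq_xxxx power3_eq_cube)
    ultimately show ?thesis by (simp add: algebra_simps)
  qed
  have e2: "k*a*T^3 \<ge> -(\<bar>k\<bar>*\<bar>a\<bar>*T^3)"
  proof -
    have "\<bar>k*a*T^3\<bar> = \<bar>k\<bar>*\<bar>a\<bar>*T^3" using T3 by (simp add: abs_mult)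
    thus ?thesis by linarith
  qed
  have e3: "a^2*T^2 \<ge> a^2"
    using mult_left_mono[of 1 "T^2" "a^2"] T1 by (simp add: one_le_power)
  have a2: "a^2 > 0" using assms by simp
  have "a * (-(1/3)*a*T^4 - k*T^3 - 2*a*T^2 + a) = -(a^2*T^4/3) - k*a*T^3 - 2*(a^2*T^2) + a^2"
    by (simp add: algebra_simps power2_eq_square)
  also have "\<dots> < 0" using e1 e2 e3 a2 by linarith
  finally show ?thesis unfolding T_def .
qed

theorem lemma4p10:
  fixes l1 l2 l3 :: real
  assumes "(l1, l2, l3, l2) \<noteq> ((0, 0, 0, 0) :: bcubic)"
  shows "\<exists>s::real. cubic_disc (cadd (1/3, 0, -1, 0) (cscale s (l1, l2, l3, l2))) = 0"
proof -
  have eq: "\<And>s. cadd (1/3, 0, -1, 0) (cscale s (l1, l2, l3, l2)) = (1/3 + s*l1, s*l2, s*l3 - 1, s*l2)"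
    by (simp add: cadd_def cscale_def)
  define P where "P = (\<lambda>t::real. l1*t^3 + l2*t^2 + l3*t + l2)"
  define P' where "P' = (\<lambda>t::real. 3*l1*t^2 + 2*l2*t + l3)"
  define F where "F = (\<lambda>t::real. t^3/3 - t)"
  define F' where "F' = (\<lambda>t::real. t^2 - 1)"
  define W where "W = (\<lambda>t::real. -(1/3)*l2*t^4 - (2/3*l3 + 2*l1)*t^3 - 2*l2*t^2 + l2)"
  have Weq: "\<And>t. W t = F t * P' t - F' t * P t"
    unfolding W_def F_def P'_def F'_def P_def
    by (simp add: algebra_simps power2_eq_square power3_eq_cube power4_eq_xxxx)
  have key: "\<exists>s. cubic_disc (1/3 + s*l1, s*l2, s*l3 - 1, s*l2) = 0"
    if "F t + s * P t = 0" "F' t + s * P' t = 0" for s t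
  proof -
    have "(1/3 + s*l1)*t^3 + (s*l2)*t^2 + (s*l3 - 1)*t + s*l2 = 0"
      using that(1) unfolding F_def P_def by (simp add: algebra_simps)
    moreover have "3*(1/3 + s*l1)*t^2 + 2*(s*l2)*t + (s*l3 - 1) = 0"
      using that(2) unfolding F'_def P'_def by (simp add: algebra_simps)
    ultimately show ?thesis by (intro exI[of _ s] dr)
  qed
  have keyW: "\<exists>s. cubic_disc (1/3 + s*l1, s*l2, s*l3 - 1, s*l2) = 0"
    if "W t = 0" "P t \<noteq> 0 \<or> P' t \<noteq> 0" for t
  proof (cases "P t = 0")
    case False
    define s where "s = - F t / P t"
    have 1: "F t + s * P t = 0" unfolding s_def using False by simp
    have "F' t * P t = F t * P' t" using that(1) Weq[of t] by simp
    hence "F' t + s * P' t = 0" unfolding s_def using False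
      by (simp add: field_simps)
    thus ?thesis using key 1 by blast
  next
    case True
    hence P'n: "P' t \<noteq> 0" using that(2) by simp
    have "F t * P' t = 0" using that(1) Weq[of t] True by simp
    hence Ft: "F t = 0" using P'n by simp
    define s where "s = - F' t / P' t"
    have "F' t + s * P' t = 0" unfolding s_def using P'n by simp
    moreover have "F t + s * P t = 0" using Ft True by simp
    ultimately show ?thesis using key by blast
  qed
  show ?thesis
  proof (cases "l2 = 0")
    case True
    hence ne: "l1 \<noteq> 0 \<or> l3 \<noteq> 0" using assms by auto
    show ?thesis
    proof (cases "l1 = 0")
      case False
      show ?thesis unfolding eq
        by (rule exI[of _ "-1/(3*l1)"]) (use False True in \<open>simp add: cubic_disc_def\<close>)
    next
      case l1: True
      hence "l3 \<noteq> 0" using ne by simp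
      show ?thesis unfolding eq
        by (rule exI[of _ "1/l3"]) (use \<open>l3 \<noteq> 0\<close> True in \<open>simp add: cubic_disc_def\<close>)
    qed
  next
    case False
    define k where "k = 2/3*l3 + 2*l1"
    define T where "T = 1 + 3*\<bar>k\<bar>/\<bar>l2\<bar>"
    have Tpos: "T > 0" unfolding T_def by (simp add: add_pos_nonneg)
    have WT: "l2 * W T < 0"
    proof -
      have "W T = -(1/3)*l2*T^4 - k*T^3 - 2*l2*T^2 + l2" unfolding W_def k_def by simp
      thus ?thesis using big[OF False, of k] unfolding T_def by simp
    qed
    have WmT: "l2 * W (-T) < 0"
    proof -
      have "W (-T) = -(1/3)*l2*T^4 - (-k)*T^3 - 2*l2*T^2 + l2" unfolding W_def k_def by (simp add: algebra_simps)
      moreover have "T = 1 + 3*\<bar>-k\<bar>/\<bar>l2\<bar>" unfolding T_def by simp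
      ultimately show ?thesis using big[OF False, of "-k"] by simp
    qed
    have W0: "l2 * W 0 > 0" unfolding W_def using False by (auto simp add: zero_less_mult_iff)
    have cont: "isCont (\<lambda>t. l2 * W t) x" for x
      unfolding W_def by (intro continuous_intros)
    obtain t0 where t0: "0 \<le> t0" "t0 \<le> T" "l2 * W t0 = 0"
      using IVT2[of "\<lambda>t. l2 * W t" T 0 0] WT W0 Tpos cont by (smt (verit))
    obtain t1 where t1: "-T \<le> t1" "t1 \<le> 0" "l2 * W t1 = 0"
      using IVT[of "\<lambda>t. l2 * W t" "-T" 0 0] WmT W0 Tpos cont by (smt (verit))
    have t0p: "t0 > 0" using t0 W0 by (cases "t0 = 0") auto
    have t1n: "t1 < 0" using t1 W0 by (cases "t1 = 0") auto
    have Wt0: "W t0 = 0" and Wt1: "W t1 = 0" using t0 t1 False by auto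
    show ?thesis
    proof (cases "(P t0 \<noteq> 0 \<or> P' t0 \<noteq> 0)")
      case True
      then show ?thesis unfolding eq using keyW Wt0 by blast
    next
      case n0: False
      show ?thesis
      proof (cases "(P t1 \<noteq> 0 \<or> P' t1 \<noteq> 0)")
        case True
        then show ?thesis unfolding eq using keyW Wt1 by blast
      next
        case n1: False
        have a1: "l3 = -3*l1*t0^2 - 2*l2*t0" using n0 unfolding P'_def by simp
        have a2: "l3 = -3*l1*t1^2 - 2*l2*t1" using n1 unfolding P'_def by simp
        have b1: "-2*l1*t0^3 - l2*t0^2 + l2 = 0"
          using n0 a1 unfolding P_def by (simp add: algebra_simps power2_eq_square power3_eq_cube)
        have b2: "-2*l1*t1^3 - l2*t1^2 + l2 = 0"
          using n1 a2 unfolding P_def by (simp add: algebra_simps power2_eq_square power3_eq_cube)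
        have d: "t0 - t1 \<noteq> 0" using t0p t1n by simp
        have "(t0 - t1) * (3*l1*(t0+t1) + 2*l2) = 0"
          using a1 a2 by (simp add: algebra_simps power2_eq_square)
        hence c1: "3*l1*(t0+t1) + 2*l2 = 0" using d by simp
        have "(t0 - t1) * (2*l1*(t0^2+t0*t1+t1^2) + l2*(t0+t1)) = 0"
          using b1 b2 by (simp add: algebra_simps power2_eq_square power3_eq_cube)
        hence c2: "2*l1*(t0^2+t0*t1+t1^2) + l2*(t0+t1) = 0" using d by simp
        have l2e: "l2 = -3/2*l1*(t0+t1)" using c1 by simp
        have "l1 * (t0-t1)^2 = 0"
          using c2 unfolding l2e by (simp add: algebra_simps power2_eq_square)
        hence "l1 = 0" using d by simp
        hence "l2 = 0" using l2e by simp
        thus ?thesis using False by simp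
      qed
    qed
  qed
qed

end
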